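(* Let $\alpha\in(0,1)$, let $0=t_0<t_1<\cdots$ be arbitrary time levels with $\tau_k=t_k-t_{k-1}$, and let $n\ge2$. Then (i) $a^{(n)}_{n-k-1}-a^{(n)}_{n-k}=I^{(n)}_{n-k-1}+J^{(n)}_{n-k}$ for $1\le k\le n-1$; (ii) $\frac{2(1-\alpha)}{2-\alpha}a^{(n)}_0-a^{(n)}_1=\frac{\alpha}{2-\alpha}\omega_{1-\alpha}(\tau_n)+J^{(n)}_1$.
   Context: $\omega_\beta(t):=t^{\beta-1}/\Gamma(\beta)$ for $t>0$ and $\beta\notin\{0,-1,-2,\dots\}$ (so $\omega_{-\alpha}(t)=t^{-\alpha-1}/\Gamma(-\alpha)$). $a^{(n)}_{n-k}:=\frac1{\tau_k}\int_{t_{k-1}}^{t_k}\omega_{1-\alpha}(t_n-s)\,ds$ for $1\le k\le n$; $I^{(n)}_{n-k}:=\int_{t_{k-1}}^{t_k}\frac{t-t_k}{\tau_k}\omega_{-\alpha}(t_n-t)\,dt$ for $1\le k\le n$; $J^{(n)}_{n-k}:=\int_{t_{k-1}}^{t_k}\frac{t_{k-1}-t}{\tau_k}\omega_{-\alpha}(t_n-t)\,dt$ for $1\le k\le n-1$. *)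

theory Defs
  imports "HOL-Analysis.Analysis"
begin

definition omega :: "real \<Rightarrow> real \<Rightarrow> real" where
  "omega \<beta> s = s powr (\<beta> - 1) / Gamma \<beta>"

definition tau :: "(nat \<Rightarrow> real) \<Rightarrow> nat \<Rightarrow> real" where
  "tau t k = t k - t (k - 1)"

text \<open>aL t al n k  is  a^(n)_(n-k)  (for 1 <= k <= n).\<close>
definition aL :: "(nat \<Rightarrow> real) \<Rightarrow> real \<Rightarrow> nat \<Rightarrow> nat \<Rightarrow> real" where
  "aL t \<alpha> n k = (1 / tau t k) * integral {t (k - 1)..t k} (\<lambda>s. omega (1 - \<alpha>) (t n - s))"

text \<open>IL t al n k  is  I^(n)_(n-k)  (for 1 <= k <= n).\<close>
definition IL :: "(nat \<Rightarrow> real) \<Rightarrow> real \<Rightarrow> nat \<Rightarrow> nat \<Rightarrow> real" where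
  "IL t \<alpha> n k = integral {t (k - 1)..t k}
      (\<lambda>s. (s - t k) / tau t k * omega (- \<alpha>) (t n - s))"

text \<open>JL t al n k  is  J^(n)_(n-k)  (for 1 <= k <= n-1).\<close>
definition JL :: "(nat \<Rightarrow> real) \<Rightarrow> real \<Rightarrow> nat \<Rightarrow> nat \<Rightarrow> real" where
  "JL t \<alpha> n k = integral {t (k - 1)..t k}
      (\<lambda>s. (t (k - 1) - s) / tau t k * omega (- \<alpha>) (t n - s))"

end

theory Submission
  imports Defs
begin

lemma rG: "inverse (Gamma (- \<alpha>)) = - \<alpha> * inverse (Gamma (1 - \<alpha>::real))"
  using rGamma_plus1[of "-\<alpha>"] by (simp add: rGamma_inverse_Gamma)

lemma omega_m: "omega (- \<alpha>) x = - \<alpha> * x powr (-\<alpha> - 1) / Gamma (1 - \<alpha>::real)"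
proof -
  have "omega (- \<alpha>) x = x powr (-\<alpha> - 1) * inverse (Gamma (- \<alpha>))"
    unfolding omega_def by (simp only: divide_inverse)
  also have "\<dots> = x powr (-\<alpha> - 1) * (- \<alpha> * inverse (Gamma (1 - \<alpha>)))"
    by (simp only: rG)
  also have "\<dots> = - \<alpha> * x powr (-\<alpha> - 1) / Gamma (1 - \<alpha>)"
    by (simp only: divide_inverse mult_ac)
  finally show ?thesis .
qed

lemma omega_1: "omega (1 - \<alpha>) x = x powr (-\<alpha>) / Gamma (1 - \<alpha>::real)"
  unfolding omega_def by simp

lemma dpow: "T - x > 0 \<Longrightarrow> ((\<lambda>s. (T - s) powr (c::real)) has_real_derivative (- c * (T - x) powr (c - 1))) (at x)"
  by (rule derivative_eq_intros refl | simp)+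

lemma powr_split: "(y::real) > 0 \<Longrightarrow> y powr (-\<alpha>) = y * y powr (-\<alpha> - 1)"
  by (simp add: powr_diff field_simps)

lemma powr_split2: assumes "(y::real) \<ge> 0" shows "y powr (1 - \<alpha>) = y * y powr (-\<alpha>)"
proof (cases "y = 0")
  case False
  then have "y powr (1 + - \<alpha>) = y powr 1 * y powr (-\<alpha>)" by (simp only: powr_add)
  then show ?thesis using False \<open>y \<ge> 0\<close> by simp
qed simp

lemma alg1:
  fixes E D G y c r \<alpha> x b :: real
  assumes "E \<noteq> 0" "D \<noteq> 0" "G \<noteq> 0" "y - c = b - x"
  shows "(- \<alpha>) / (E * G * D) * (- E * (y * r)) + (- c) / (G * D) * (- (- \<alpha>) * r) = (x - b) / D * (- \<alpha> * r / G)"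
proof -
  have yy: "y = c + b - x" using assms(4) by simp
  show ?thesis unfolding yy using assms(1-3) by (simp add: field_simps)
qed
lemma alg2:
  fixes E D G y c r \<alpha> x a :: real
  assumes "E \<noteq> 0" "D \<noteq> 0" "G \<noteq> 0" "c - y = x - a"
  shows "\<alpha> / (E * G * D) * (- E * (y * r)) + c / (G * D) * (- (- \<alpha>) * r) = (a - x) / D * (- \<alpha> * r / G)"
proof -
  have yy: "y = c + a - x" using assms(4) by simp
  show ?thesis unfolding yy using assms(1-3) by (simp add: field_simps)
qed

lemma alg3:
  fixes E D G u v qa qb \<alpha> :: real
  assumes "E \<noteq> 0" "D \<noteq> 0" "G \<noteq> 0" "u = v + D" "\<alpha> = 1 - E"
  shows "(- \<alpha> / (E * G * D)) * (v * qb) + (- v / (G * D)) * qb - ((- \<alpha> / (E * G * D)) * (u * qa) + (- v / (G * D)) * qa)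
     = (u * qa - v * qb) / (E * G) / D - qa / G"
  unfolding assms(4,5) using assms(1-3) by (simp add: field_simps)
lemma alg4:
  fixes E D G u v qa qb \<alpha> :: real
  assumes "E \<noteq> 0" "D \<noteq> 0" "G \<noteq> 0" "u = v + D" "\<alpha> = 1 - E"
  shows "(\<alpha> / (E * G * D)) * (v * qb) + (u / (G * D)) * qb - ((\<alpha> / (E * G * D)) * (u * qa) + (u / (G * D)) * qa)
     = qb / G - (u * qa - v * qb) / (E * G) / D"
  unfolding assms(4,5) using assms(1-3) by (simp add: field_simps)

lemma alg6: fixes \<tau> x E G :: real assumes "\<tau> \<noteq> 0" shows "\<tau> * x / (E * G) / \<tau> = x / G / E"
  using assms by (simp add: field_simps)

lemma alg5:
  fixes \<alpha> w Q :: real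
  assumes "\<alpha> < 1"
  shows "2 * (1 - \<alpha>) / (2 - \<alpha>) * (w / (1 - \<alpha>)) - Q = \<alpha> / (2 - \<alpha>) * w + (w - Q)"
proof -
  obtain E where E: "E = 1 - \<alpha>" by blast
  have E0: "E > 0" using E assms by simp
  have a: "\<alpha> = 1 - E" using E by simp
  have "2 * E / (1 + E) * (w / E) - Q = (1 - E) / (1 + E) * w + (w - Q)"
    using E0 by (simp add: field_simps)
  then show ?thesis unfolding a by (simp add: algebra_simps)
qed

lemma gen:
  fixes a b T \<alpha> c1 c2 :: real and g :: "real \<Rightarrow> real"
  assumes ab: "a < b" and bT: "b \<le> T" and al: "0 < \<alpha>" "\<alpha> < 1"
    and c2: "b = T \<Longrightarrow> c2 = 0"
    and eq: "\<And>x. a < x \<Longrightarrow> x < b \<Longrightarrow>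
       c1 * (-(1 - \<alpha>) * (T - x) powr (1 - \<alpha> - 1)) + c2 * (- (- \<alpha>) * (T - x) powr (- \<alpha> - 1)) = g x"
  shows "(g has_integral ((c1 * (T - b) powr (1 - \<alpha>) + c2 * (T - b) powr (- \<alpha>))
                         - (c1 * (T - a) powr (1 - \<alpha>) + c2 * (T - a) powr (- \<alpha>)))) {a..b}"
proof -
  define F where "F s = c1 * (T - s) powr (1 - \<alpha>) + c2 * (T - s) powr (- \<alpha>)" for s
  have "(g has_integral (F b - F a)) {a..b}"
  proof (rule fundamental_theorem_of_calculus_interior_strong[where S = "{}"])
    show "finite {}" by simp
    show "a \<le> b" using ab by simp
    fix x assume x: "x \<in> {a<..<b} - {}"
    then have "T - x > 0" using bT by auto
    have d: "(F has_real_derivative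
       c1 * (-(1 - \<alpha>) * (T - x) powr (1 - \<alpha> - 1)) + c2 * (- (- \<alpha>) * (T - x) powr (- \<alpha> - 1))) (at x)"
      unfolding F_def
      by (intro DERIV_add DERIV_cmult dpow \<open>T - x > 0\<close>)
    show "(F has_vector_derivative g x) (at x)"
      using d eq[of x] x by (simp add: has_real_derivative_iff_has_vector_derivative)
  next
    show "continuous_on {a..b} F"
    proof (cases "b = T")
      case True
      then have "F = (\<lambda>s. c1 * (T - s) powr (1 - \<alpha>))" using c2 by (auto simp: F_def fun_eq_iff)
      moreover have "continuous_on {a..b} (\<lambda>s. (T - s) powr (1 - \<alpha>))"
        using True al by (intro continuous_on_powr' continuous_intros) auto
      ultimately show ?thesis by (auto intro: continuous_intros)
    next
      case False
      then have bT': "b < T" using bT by simp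
      show ?thesis unfolding F_def
        using bT' by (intro continuous_intros continuous_on_powr') auto
    qed
  qed
  then show ?thesis by (simp add: F_def)
qed

lemma LA:
  fixes a b T \<alpha> :: real
  assumes ab: "a < b" and bT: "b \<le> T" and al: "0 < \<alpha>" "\<alpha> < 1"
  shows "((\<lambda>s. omega (1 - \<alpha>) (T - s)) has_integral
           ((T - a) powr (1 - \<alpha>) - (T - b) powr (1 - \<alpha>)) / ((1 - \<alpha>) * Gamma (1 - \<alpha>))) {a..b}"
proof -
  define G where "G = Gamma (1 - \<alpha>)"
  have G0: "G > 0" unfolding G_def using al by simp
  have "((\<lambda>s. omega (1 - \<alpha>) (T - s)) has_integral
     ((- 1 / ((1 - \<alpha>) * G) * (T - b) powr (1 - \<alpha>) + 0 * (T - b) powr (- \<alpha>))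
      - (- 1 / ((1 - \<alpha>) * G) * (T - a) powr (1 - \<alpha>) + 0 * (T - a) powr (- \<alpha>)))) {a..b}"
    using ab bT al
  proof (rule gen)
    fix x assume "a < x" "x < b"
    show "- 1 / ((1 - \<alpha>) * G) * (-(1 - \<alpha>) * (T - x) powr (1 - \<alpha> - 1)) + 0 * (- (- \<alpha>) * (T - x) powr (- \<alpha> - 1))
       = omega (1 - \<alpha>) (T - x)"
      using al G0 by (simp add: omega_1 G_def[symmetric] field_simps)
  qed simp
  then show ?thesis unfolding G_def by (simp add: diff_divide_distrib)
qed

lemma LI:
  fixes a b T \<alpha> :: real
  assumes ab: "a < b" and bT: "b \<le> T" and al: "0 < \<alpha>" "\<alpha> < 1"
  shows "((\<lambda>s. (s - b) / (b - a) * omega (- \<alpha>) (T - s)) has_integral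
           ((T - a) powr (1 - \<alpha>) - (T - b) powr (1 - \<alpha>)) / ((1 - \<alpha>) * Gamma (1 - \<alpha>)) / (b - a)
           - omega (1 - \<alpha>) (T - a)) {a..b}"
proof -
  define G where "G = Gamma (1 - \<alpha>)"
  have G0: "G > 0" unfolding G_def using al by simp
  define c1 where "c1 = - \<alpha> / ((1 - \<alpha>) * G * (b - a))"
  define c2 where "c2 = - (T - b) / (G * (b - a))"
  have pa: "(T - a) powr (1 - \<alpha>) = (T - a) * (T - a) powr (- \<alpha>)"
    using ab bT by (intro powr_split2) simp
  have pb: "(T - b) powr (1 - \<alpha>) = (T - b) * (T - b) powr (- \<alpha>)"
    using ab bT by (intro powr_split2) simp
  have "((\<lambda>s. (s - b) / (b - a) * omega (- \<alpha>) (T - s)) has_integral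
     ((c1 * (T - b) powr (1 - \<alpha>) + c2 * (T - b) powr (- \<alpha>))
      - (c1 * (T - a) powr (1 - \<alpha>) + c2 * (T - a) powr (- \<alpha>)))) {a..b}"
    using ab bT al
  proof (rule gen)
    show "b = T \<Longrightarrow> c2 = 0" by (simp add: c2_def)
    fix x assume x: "a < x" "x < b"
    then have y: "T - x > 0" using bT by simp
    define r where "r = (T - x) powr (- \<alpha> - 1)"
    have nz: "(1 - \<alpha>) * G * (b - a) \<noteq> 0" "G * (b - a) \<noteq> 0" "b - a \<noteq> 0" "G \<noteq> 0"
        using al G0 ab by auto
    have e: "(T - x) powr (1 - \<alpha> - 1) = (T - x) * r" unfolding r_def using powr_split[OF y] by simp
    show "c1 * (-(1 - \<alpha>) * (T - x) powr (1 - \<alpha> - 1)) + c2 * (- (- \<alpha>) * (T - x) powr (- \<alpha> - 1))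
       = (x - b) / (b - a) * omega (- \<alpha>) (T - x)"
      unfolding e omega_m r_def[symmetric] G_def[symmetric] c1_def c2_def
      using nz al G0 ab by (intro alg1 alg2) auto
  qed
  moreover have "(c1 * (T - b) powr (1 - \<alpha>) + c2 * (T - b) powr (- \<alpha>))
      - (c1 * (T - a) powr (1 - \<alpha>) + c2 * (T - a) powr (- \<alpha>)) =
     ((T - a) powr (1 - \<alpha>) - (T - b) powr (1 - \<alpha>)) / ((1 - \<alpha>) * Gamma (1 - \<alpha>)) / (b - a)
           - omega (1 - \<alpha>) (T - a)"
    unfolding pa pb omega_1 G_def[symmetric] c1_def c2_def
    using ab bT al G0 by (intro alg3) auto
  ultimately show ?thesis by simp
qed

lemma LJ:
  fixes a b T \<alpha> :: real
  assumes ab: "a < b" and bT: "b < T" and al: "0 < \<alpha>" "\<alpha> < 1"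
  shows "((\<lambda>s. (a - s) / (b - a) * omega (- \<alpha>) (T - s)) has_integral
           omega (1 - \<alpha>) (T - b) -
           ((T - a) powr (1 - \<alpha>) - (T - b) powr (1 - \<alpha>)) / ((1 - \<alpha>) * Gamma (1 - \<alpha>)) / (b - a)) {a..b}"
proof -
  define G where "G = Gamma (1 - \<alpha>)"
  have G0: "G > 0" unfolding G_def using al by simp
  define c1 where "c1 = \<alpha> / ((1 - \<alpha>) * G * (b - a))"
  define c2 where "c2 = (T - a) / (G * (b - a))"
  have pa: "(T - a) powr (1 - \<alpha>) = (T - a) * (T - a) powr (- \<alpha>)"
    using ab bT by (intro powr_split2) simp
  have pb: "(T - b) powr (1 - \<alpha>) = (T - b) * (T - b) powr (- \<alpha>)"
    using ab bT by (intro powr_split2) simp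
  have "((\<lambda>s. (a - s) / (b - a) * omega (- \<alpha>) (T - s)) has_integral
     ((c1 * (T - b) powr (1 - \<alpha>) + c2 * (T - b) powr (- \<alpha>))
      - (c1 * (T - a) powr (1 - \<alpha>) + c2 * (T - a) powr (- \<alpha>)))) {a..b}"
    using ab _ al
  proof (rule gen)
    show "b \<le> T" using bT by simp
    show "b = T \<Longrightarrow> c2 = 0" using bT by simp
    fix x assume x: "a < x" "x < b"
    then have y: "T - x > 0" using bT by simp
    define r where "r = (T - x) powr (- \<alpha> - 1)"
    have nz: "(1 - \<alpha>) * G * (b - a) \<noteq> 0" "G * (b - a) \<noteq> 0" "b - a \<noteq> 0" "G \<noteq> 0"
        using al G0 ab by auto
    have e: "(T - x) powr (1 - \<alpha> - 1) = (T - x) * r" unfolding r_def using powr_split[OF y] by simp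
    show "c1 * (-(1 - \<alpha>) * (T - x) powr (1 - \<alpha> - 1)) + c2 * (- (- \<alpha>) * (T - x) powr (- \<alpha> - 1))
       = (a - x) / (b - a) * omega (- \<alpha>) (T - x)"
      unfolding e omega_m r_def[symmetric] G_def[symmetric] c1_def c2_def
      using nz al G0 ab by (intro alg1 alg2) auto
  qed
  moreover have "(c1 * (T - b) powr (1 - \<alpha>) + c2 * (T - b) powr (- \<alpha>))
      - (c1 * (T - a) powr (1 - \<alpha>) + c2 * (T - a) powr (- \<alpha>)) =
      omega (1 - \<alpha>) (T - b) -
     ((T - a) powr (1 - \<alpha>) - (T - b) powr (1 - \<alpha>)) / ((1 - \<alpha>) * Gamma (1 - \<alpha>)) / (b - a)"
    unfolding pa pb omega_1 G_def[symmetric] c1_def c2_def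
    using ab bT al G0 by (intro alg4) auto
  ultimately show ?thesis by simp
qed

definition Qf :: "(nat \<Rightarrow> real) \<Rightarrow> real \<Rightarrow> nat \<Rightarrow> nat \<Rightarrow> real" where
  "Qf t \<alpha> n j = ((t n - t (j - 1)) powr (1 - \<alpha>) - (t n - t j) powr (1 - \<alpha>)) / ((1 - \<alpha>) * Gamma (1 - \<alpha>)) / tau t j"

lemma mono_facts:
  assumes "strict_mono (t :: nat \<Rightarrow> real)" "1 \<le> j" "j \<le> n"
  shows "t (j - 1) < t j" "t j \<le> t n"
  using assms by (auto intro: strict_monoD simp: strict_mono_less_eq)

lemma aL_eq:
  assumes "0 < \<alpha>" "\<alpha> < 1" "strict_mono t" "1 \<le> j" "j \<le> n"
  shows "aL t \<alpha> n j = Qf t \<alpha> n j"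
  using integral_unique[OF LA[OF mono_facts[OF assms(3-5)] assms(1,2)]]
  unfolding aL_def Qf_def by (simp add: divide_inverse ac_simps)

lemma IL_eq:
  assumes "0 < \<alpha>" "\<alpha> < 1" "strict_mono t" "1 \<le> j" "j \<le> n"
  shows "IL t \<alpha> n j = Qf t \<alpha> n j - omega (1 - \<alpha>) (t n - t (j - 1))"
  using integral_unique[OF LI[OF mono_facts[OF assms(3-5)] assms(1,2)]]
  unfolding IL_def Qf_def tau_def by simp

lemma JL_eq:
  assumes "0 < \<alpha>" "\<alpha> < 1" "strict_mono t" "1 \<le> j" "j < n"
  shows "JL t \<alpha> n j = omega (1 - \<alpha>) (t n - t j) - Qf t \<alpha> n j"
proof -
  have "t (j - 1) < t j" "t j < t n" using assms(3-5) by (auto intro: strict_monoD)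
  from integral_unique[OF LJ[OF this assms(1,2)]] show ?thesis
    unfolding JL_def Qf_def tau_def by simp
qed

theorem lemma4p1:
  fixes t :: "nat \<Rightarrow> real" and \<alpha> :: real and n :: nat
  assumes "0 < \<alpha>" and "\<alpha> < 1"
    and "t 0 = 0" and "strict_mono t"
    and "2 \<le> n"
  shows "(\<forall>k. 1 \<le> k \<and> k \<le> n - 1 \<longrightarrow>
            aL t \<alpha> n (k + 1) - aL t \<alpha> n k = IL t \<alpha> n (k + 1) + JL t \<alpha> n k)
       \<and> 2 * (1 - \<alpha>) / (2 - \<alpha>) * aL t \<alpha> n n - aL t \<alpha> n (n - 1)
           = \<alpha> / (2 - \<alpha>) * omega (1 - \<alpha>) (tau t n) + JL t \<alpha> n (n - 1)"
proof
  show "\<forall>k. 1 \<le> k \<and> k \<le> n - 1 \<longrightarrow>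
            aL t \<alpha> n (k + 1) - aL t \<alpha> n k = IL t \<alpha> n (k + 1) + JL t \<alpha> n k"
  proof (intro allI impI)
    fix k assume k: "1 \<le> k \<and> k \<le> n - 1"
    have "aL t \<alpha> n (k + 1) = Qf t \<alpha> n (k + 1)" using k assms by (intro aL_eq) auto
    moreover have "aL t \<alpha> n k = Qf t \<alpha> n k" using k assms by (intro aL_eq) auto
    moreover have "IL t \<alpha> n (k + 1) = Qf t \<alpha> n (k + 1) - omega (1 - \<alpha>) (t n - t k)"
      using IL_eq[of \<alpha> t "k + 1" n] k assms by auto
    moreover have "JL t \<alpha> n k = omega (1 - \<alpha>) (t n - t k) - Qf t \<alpha> n k"
      using k assms by (intro JL_eq) auto
    ultimately show "aL t \<alpha> n (k + 1) - aL t \<alpha> n k = IL t \<alpha> n (k + 1) + JL t \<alpha> n k"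
      by simp
  qed
next
  define \<tau> where "\<tau> = t n - t (n - 1)"
  have tpos: "\<tau> > 0" unfolding \<tau>_def using assms(4,5) by (auto intro: strict_monoD)
  define G where "G = Gamma (1 - \<alpha>)"
  have G0: "G > 0" unfolding G_def using assms(1,2) by simp
  have a0: "aL t \<alpha> n n = \<tau> * \<tau> powr (- \<alpha>) / ((1 - \<alpha>) * G) / \<tau>"
    using aL_eq[of \<alpha> t n n] assms powr_split2[of \<tau> \<alpha>] tpos
    unfolding Qf_def tau_def \<tau>_def G_def by auto
  have w: "omega (1 - \<alpha>) (tau t n) = \<tau> powr (- \<alpha>) / G"
    unfolding omega_1 tau_def \<tau>_def G_def ..
  have J: "JL t \<alpha> n (n - 1) = \<tau> powr (- \<alpha>) / G - Qf t \<alpha> n (n - 1)"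
    using JL_eq[of \<alpha> t "n - 1" n] assms unfolding omega_1 \<tau>_def G_def by auto
  have A1: "aL t \<alpha> n (n - 1) = Qf t \<alpha> n (n - 1)" using assms by (intro aL_eq) auto
  show "2 * (1 - \<alpha>) / (2 - \<alpha>) * aL t \<alpha> n n - aL t \<alpha> n (n - 1)
           = \<alpha> / (2 - \<alpha>) * omega (1 - \<alpha>) (tau t n) + JL t \<alpha> n (n - 1)"
  proof -
    have tne: "\<tau> \<noteq> 0" using tpos by simp
    have a0': "aL t \<alpha> n n = (\<tau> powr (- \<alpha>) / G) / (1 - \<alpha>)"
      using a0 alg6[OF tne, of "\<tau> powr (- \<alpha>)" "1 - \<alpha>" G] by (rule trans)
    have "2 * (1 - \<alpha>) / (2 - \<alpha>) * aL t \<alpha> n n - aL t \<alpha> n (n - 1)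
        = 2 * (1 - \<alpha>) / (2 - \<alpha>) * ((\<tau> powr (- \<alpha>) / G) / (1 - \<alpha>)) - Qf t \<alpha> n (n - 1)"
      by (simp only: a0' A1)
    also have "\<dots> = \<alpha> / (2 - \<alpha>) * (\<tau> powr (- \<alpha>) / G) + (\<tau> powr (- \<alpha>) / G - Qf t \<alpha> n (n - 1))"
      by (rule alg5[OF assms(2)])
    also have "\<dots> = \<alpha> / (2 - \<alpha>) * omega (1 - \<alpha>) (tau t n) + JL t \<alpha> n (n - 1)"
      by (simp only: w J)
    finally show ?thesis .
  qed
qed

end
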